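(* Let $d$ be a squarefree integer and let $E_d$ be the quadratic twist $dy^2=x^3-35x-98$ of the curve $y^2+xy=x^3-x^2-2x-1$, equivalently (via $(x,y)\mapsto(dx,d^2y)$) the curve $y^2=x^3-35d^2x-98d^3$. Then the torsion subgroup of $E_d(\mathbb{Q})$ is isomorphic to $\mathbb{Z}/2\mathbb{Z}$; in the model $y^2=x^3-35d^2x-98d^3$ it is generated by the point $(7d,0)$. *)

theory Defs
  imports Complex_Main "HOL-Computational_Algebra.Squarefree"
begin

text \<open>Rational points of the short Weierstrass curve y^2 = x^3 + a x + b over Q.
  None is the point at infinity O; Some (x, y) is an affine point.\<close>

type_synonym ec_point = "(rat \<times> rat) option"

definition on_curve :: "rat \<Rightarrow> rat \<Rightarrow> ec_point \<Rightarrow> bool" where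
  "on_curve a b P = (case P of None \<Rightarrow> True
                     | Some (x, y) \<Rightarrow> y^2 = x^3 + a * x + b)"

definition ec_add :: "rat \<Rightarrow> ec_point \<Rightarrow> ec_point \<Rightarrow> ec_point" where
  "ec_add a P Q = (case P of None \<Rightarrow> Q | Some (x1, y1) \<Rightarrow>
     (case Q of None \<Rightarrow> P | Some (x2, y2) \<Rightarrow>
        (if x1 = x2 then
           (if y1 = - y2 then None
            else (let l = (3 * x1^2 + a) / (2 * y1);
                      x3 = l^2 - 2 * x1
                  in Some (x3, l * (x1 - x3) - y1)))
         else (let l = (y2 - y1) / (x2 - x1);
                   x3 = l^2 - x1 - x2
               in Some (x3, l * (x1 - x3) - y1)))))"

primrec ec_mult :: "rat \<Rightarrow> nat \<Rightarrow> ec_point \<Rightarrow> ec_point" where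
  "ec_mult a 0 P = None"
| "ec_mult a (Suc n) P = ec_add a P (ec_mult a n P)"

definition ec_torsion :: "rat \<Rightarrow> rat \<Rightarrow> ec_point set" where
  "ec_torsion a b = {P. on_curve a b P \<and> (\<exists>n>0. ec_mult a n P = None)}"

end

theory Submission
  imports Defs
begin


definition fc :: "rat \<Rightarrow> rat \<Rightarrow> rat \<Rightarrow> rat" where
  "fc a b x = x^3 + a*x + b"

definition LINE :: "rat \<Rightarrow> rat \<Rightarrow> rat \<Rightarrow> rat \<Rightarrow> rat \<Rightarrow> rat \<Rightarrow> rat \<Rightarrow> bool" where
  "LINE a b l c u1 u2 u3 \<longleftrightarrow> u1 + u2 + u3 = l^2 \<and> u1*u2 + u1*u3 + u2*u3 = a - 2*l*c \<and> u1*u2*u3 = c^2 - b"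

lemma LINE_fc:
  assumes "LINE a b l c u1 u2 u3"
  shows "fc a b u1 = (l*u1 + c)^2" "fc a b u2 = (l*u2 + c)^2" "fc a b u3 = (l*u3 + c)^2"
proof -
  from assms have e: "u1 + u2 + u3 = l^2" "u1*u2 + u1*u3 + u2*u3 = a - 2*l*c" "u1*u2*u3 = c^2 - b"
    unfolding LINE_def by auto
  show "fc a b u1 = (l*u1 + c)^2" using e unfolding fc_def by algebra
  show "fc a b u2 = (l*u2 + c)^2" using e unfolding fc_def by algebra
  show "fc a b u3 = (l*u3 + c)^2" using e unfolding fc_def by algebra
qed

lemma LINE_perm:
  assumes "LINE a b l c u1 u2 u3"
  shows "LINE a b l c u2 u1 u3" "LINE a b l c u1 u3 u2" "LINE a b l c u3 u2 u1"
    "LINE a b (-l) (-c) u1 u2 u3"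
  using assms unfolding LINE_def by (auto simp: algebra_simps)

lemma chord_LINE:
  assumes c1: "y1^2 = fc a b x1" and c2: "y2^2 = fc a b x2" and ne: "x1 \<noteq> x2"
    and l: "l * (x2 - x1) = y2 - y1" and c: "c = y1 - l * x1"
  shows "LINE a b l c x1 x2 (l^2 - x1 - x2)"
proof -
  have k0: "(x2 - x1) * (l * (y1 + y2)) = (x2 - x1) * (x1^2 + x1*x2 + x2^2 + a)"
    using c1 c2 l unfolding fc_def by algebra
  have k: "l * (y1 + y2) = x1^2 + x1*x2 + x2^2 + a"
    using k0 ne by simp
  show ?thesis unfolding LINE_def
    using k c1 l c unfolding fc_def by algebra
qed

lemma tan_LINE:
  assumes c1: "y1^2 = fc a b x1" and l: "l * (2*y1) = 3*x1^2 + a" and c: "c = y1 - l * x1"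
  shows "LINE a b l c x1 x1 (l^2 - 2*x1)"
  unfolding LINE_def using c1 l c unfolding fc_def by algebra


lemma add_None_left[simp]: "ec_add a None Q = Q"
  by (simp add: ec_add_def)

lemma add_None_right[simp]: "ec_add a P None = P"
  unfolding ec_add_def by (simp split: option.split prod.split)

lemma add_chord:
  assumes "x1 \<noteq> x2"
  shows "ec_add a (Some (x1, y1)) (Some (x2, y2)) =
    (let l = (y2 - y1) / (x2 - x1); x3 = l^2 - x1 - x2 in Some (x3, l * (x1 - x3) - y1))"
  using assms unfolding ec_add_def by simp

lemma add_vert:
  assumes "x1 = x2" "y1 = - y2"
  shows "ec_add a (Some (x1, y1)) (Some (x2, y2)) = None"
  using assms unfolding ec_add_def by simp

lemma add_tan:
  assumes "x1 = x2" "y1 \<noteq> - y2"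
  shows "ec_add a (Some (x1, y1)) (Some (x2, y2)) =
    (let l = (3 * x1^2 + a) / (2 * y1); x3 = l^2 - 2 * x1 in Some (x3, l * (x1 - x3) - y1))"
  using assms unfolding ec_add_def Let_def by simp

lemma add_line:
  assumes c1: "y1^2 = fc a b x1" and c2: "y2^2 = fc a b x2" and nv: "\<not> (x1 = x2 \<and> y1 = - y2)"
  shows "\<exists>l c. y1 = l*x1 + c \<and> y2 = l*x2 + c \<and> LINE a b l c x1 x2 (l^2 - x1 - x2) \<and>
     ec_add a (Some (x1, y1)) (Some (x2, y2)) = Some (l^2 - x1 - x2, -(l*(l^2 - x1 - x2) + c))"
proof (cases "x1 = x2")
  case False
  define l where "l = (y2 - y1) / (x2 - x1)"
  define c where "c = y1 - l * x1"
  have ne: "x2 - x1 \<noteq> 0" using False by simp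
  have l1: "l * (x2 - x1) = y2 - y1" unfolding l_def using ne by simp
  have L: "LINE a b l c x1 x2 (l^2 - x1 - x2)"
    using chord_LINE[OF c1 c2 False l1 c_def] .
  have y2: "y2 = l*x2 + c" unfolding c_def using l1 by (simp add: algebra_simps)
  have "ec_add a (Some (x1, y1)) (Some (x2, y2)) = Some (l^2 - x1 - x2, -(l*(l^2 - x1 - x2) + c))"
    unfolding add_chord[OF False] Let_def l_def[symmetric] c_def by (simp add: algebra_simps)
  moreover have "y1 = l*x1 + c" by (simp add: c_def)
  ultimately show ?thesis using L y2 by blast
next
  case True
  have "y2^2 = y1^2" using c1 c2 True by simp
  hence "y2 = y1 \<or> y2 = - y1" by (simp add: power2_eq_iff)
  hence y2: "y2 = y1" and y1: "y1 \<noteq> 0" using nv True by auto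
  define l where "l = (3 * x1^2 + a) / (2 * y1)"
  define c where "c = y1 - l * x1"
  have l1: "l * (2*y1) = 3*x1^2 + a" unfolding l_def using y1 by simp
  have L: "LINE a b l c x1 x1 (l^2 - 2*x1)" using tan_LINE[OF c1 l1 c_def] .
  have nv2: "y1 \<noteq> - y2" using y1 y2 by simp
  have "ec_add a (Some (x1, y1)) (Some (x2, y2)) = Some (l^2 - 2*x1, -(l*(l^2 - 2*x1) + c))"
    unfolding add_tan[OF True nv2] Let_def l_def[symmetric] c_def by (simp add: algebra_simps)
  moreover have "y1 = l*x1 + c" by (simp add: c_def)
  moreover have "l^2 - 2*x1 = l^2 - x1 - x2" using True by simp
  ultimately show ?thesis using L y2 True by (metis)
qed

lemma disc_lemma:
  assumes "fc a b u = 0" "3*u^2 + a = 0"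
  shows "4*a^3 + 27*b^2 = 0"
  using assms unfolding fc_def by algebra

lemma line_add:
  assumes ns: "4*a^3 + 27*b^2 \<noteq> 0" and L: "LINE a b l c u1 u2 u3"
  shows "ec_add a (Some (u1, l*u1 + c)) (Some (u2, l*u2 + c)) = Some (u3, -(l*u3 + c))"
proof (cases "u1 = u2")
  case False
  have e: "u1 + u2 + u3 = l^2" using L unfolding LINE_def by auto
  have ne: "u2 - u1 \<noteq> 0" using False by simp
  have sl: "(l * u2 + c - (l * u1 + c)) / (u2 - u1) = l"
    using ne by (simp add: field_simps)
  have u3: "u3 = l^2 - u1 - u2" using e by simp
  show ?thesis unfolding add_chord[OF False] Let_def sl u3
    by (simp add: algebra_simps)
next
  case True
  have e: "u1 + u2 + u3 = l^2" "u1*u2 + u1*u3 + u2*u3 = a - 2*l*c" using L unfolding LINE_def by auto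
  have d: "3*u1^2 + a = 2*l*(l*u1 + c)" using e True by algebra
  have f: "fc a b u1 = (l*u1 + c)^2" using LINE_fc[OF L] by simp
  have y: "l*u1 + c \<noteq> 0"
  proof
    assume "l*u1 + c = 0"
    hence "fc a b u1 = 0" "3*u1^2 + a = 0" using f d by auto
    thus False using disc_lemma ns by blast
  qed
  have nv: "l * u1 + c \<noteq> - (l * u2 + c)" using y True by simp
  have sl: "(3 * u1^2 + a) / (2 * (l * u1 + c)) = l" using d y by (simp add: field_simps)
  have u3: "u3 = l^2 - 2*u1" using e True by simp
  show ?thesis unfolding add_tan[OF True nv] Let_def sl u3
    by (simp add: algebra_simps)
qed


fun negp :: "ec_point \<Rightarrow> ec_point" where
  "negp None = None"
| "negp (Some (x, y)) = Some (x, - y)"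

lemma on_curve_Some[simp]: "on_curve a b (Some (x, y)) \<longleftrightarrow> y^2 = fc a b x"
  unfolding on_curve_def fc_def by simp

lemma on_curve_None[simp]: "on_curve a b None"
  unfolding on_curve_def by simp

lemma on_curve_negp: "on_curve a b P \<Longrightarrow> on_curve a b (negp P)"
  by (cases P) auto

lemma negp_negp[simp]: "negp (negp P) = P"
  by (cases P) auto

lemma add_negp: "ec_add a P (negp P) = None"
  by (cases P) (auto simp: add_vert)

lemma line_points:
  assumes "y1^2 = fc a b x1" "y2^2 = fc a b x2" "\<not> (x1 = x2 \<and> y1 = - y2)"
  obtains l c where "y1 = l*x1 + c" "y2 = l*x2 + c" "LINE a b l c x1 x2 (l^2 - x1 - x2)"
     "ec_add a (Some (x1, y1)) (Some (x2, y2)) = Some (l^2 - x1 - x2, -(l*(l^2 - x1 - x2) + c))"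
  using add_line[OF assms] by blast

lemma add_closed:
  assumes "on_curve a b P" "on_curve a b Q"
  shows "on_curve a b (ec_add a P Q)"
proof (cases P)
  case None thus ?thesis using assms by simp
next
  case (Some p)
  then obtain x1 y1 where P: "P = Some (x1, y1)" by (cases p) auto
  show ?thesis
  proof (cases Q)
    case None thus ?thesis using assms by simp
  next
    case (Some q)
    then obtain x2 y2 where Q: "Q = Some (x2, y2)" by (cases q) auto
    have c1: "y1^2 = fc a b x1" and c2: "y2^2 = fc a b x2" using assms P Q by auto
    show ?thesis
    proof (cases "x1 = x2 \<and> y1 = - y2")
      case True thus ?thesis using P Q add_vert[of x1 x2 y1 y2 a] add_vert[of x2 x1 y2 y1 a] by auto
    next
      case False
      from line_points[OF c1 c2 False] obtain l c where
        L: "LINE a b l c x1 x2 (l^2 - x1 - x2)"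
        and E: "ec_add a (Some (x1, y1)) (Some (x2, y2)) = Some (l^2 - x1 - x2, -(l*(l^2 - x1 - x2) + c))"
        by blast
      have "(-(l*(l^2 - x1 - x2) + c))^2 = (l*(l^2 - x1 - x2) + c)^2" by algebra
      thus ?thesis unfolding P Q E using LINE_fc(3)[OF L] by simp
    qed
  qed
qed

lemma affine_cases:
  obtains (None) "P = None" | (Some) x y where "P = Some (x, y)"
  by (cases P) auto

lemma add_comm:
  assumes ns: "4*a^3 + 27*b^2 \<noteq> 0" and "on_curve a b P" "on_curve a b Q"
  shows "ec_add a P Q = ec_add a Q P"
proof (cases P rule: affine_cases)
  case None thus ?thesis by simp
next
  case (Some x1 y1)
  note P = this
  show ?thesis
  proof (cases Q rule: affine_cases)
    case None thus ?thesis by simp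
  next
    case (Some x2 y2)
    note Q = this
    have c1: "y1^2 = fc a b x1" and c2: "y2^2 = fc a b x2" using assms P Q by auto
    show ?thesis
    proof (cases "x1 = x2 \<and> y1 = - y2")
      case True thus ?thesis using P Q add_vert[of x1 x2 y1 y2 a] add_vert[of x2 x1 y2 y1 a] by auto
    next
      case False
      from line_points[OF c1 c2 False] obtain l c where
        y: "y1 = l*x1 + c" "y2 = l*x2 + c" and
        L: "LINE a b l c x1 x2 (l^2 - x1 - x2)"
        and E: "ec_add a (Some (x1, y1)) (Some (x2, y2)) = Some (l^2 - x1 - x2, -(l*(l^2 - x1 - x2) + c))"
        by blast
      have "ec_add a (Some (x2, y2)) (Some (x1, y1)) = Some (l^2 - x1 - x2, -(l*(l^2 - x1 - x2) + c))"
        using line_add[OF ns LINE_perm(1)[OF L]] y by simp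
      thus ?thesis using E P Q by simp
    qed
  qed
qed

lemma negp_add:
  assumes ns: "4*a^3 + 27*b^2 \<noteq> 0" and "on_curve a b P" "on_curve a b Q"
  shows "negp (ec_add a P Q) = ec_add a (negp P) (negp Q)"
proof (cases P rule: affine_cases)
  case None thus ?thesis by simp
next
  case (Some x1 y1)
  note P = this
  show ?thesis
  proof (cases Q rule: affine_cases)
    case None thus ?thesis by simp
  next
    case (Some x2 y2)
    note Q = this
    have c1: "y1^2 = fc a b x1" and c2: "y2^2 = fc a b x2" using assms P Q by auto
    show ?thesis
    proof (cases "x1 = x2 \<and> y1 = - y2")
      case True thus ?thesis using P Q add_vert[of x1 x2 y1 y2 a] add_vert[of x2 x1 y2 y1 a] by auto
    next
      case False
      from line_points[OF c1 c2 False] obtain l c where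
        y: "y1 = l*x1 + c" "y2 = l*x2 + c" and
        L: "LINE a b l c x1 x2 (l^2 - x1 - x2)"
        and E: "ec_add a (Some (x1, y1)) (Some (x2, y2)) = Some (l^2 - x1 - x2, -(l*(l^2 - x1 - x2) + c))"
        by blast
      have "ec_add a (Some (x1, (-l)*x1 + (-c))) (Some (x2, (-l)*x2 + (-c))) = Some (l^2 - x1 - x2, -((-l)*(l^2 - x1 - x2) + (-c)))"
        using line_add[OF ns LINE_perm(4)[OF L]] by simp
      thus ?thesis using E P Q y by (simp add: algebra_simps)
    qed
  qed
qed

lemma add_cancel:
  assumes ns: "4*a^3 + 27*b^2 \<noteq> 0" and "on_curve a b P" "on_curve a b Q"
  shows "ec_add a (ec_add a P Q) (negp Q) = P"
proof (cases P rule: affine_cases)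
  case None thus ?thesis by (simp add: add_negp)
next
  case (Some x1 y1)
  note P = this
  show ?thesis
  proof (cases Q rule: affine_cases)
    case None thus ?thesis by simp
  next
    case (Some x2 y2)
    note Q = this
    have c1: "y1^2 = fc a b x1" and c2: "y2^2 = fc a b x2" using assms P Q by auto
    show ?thesis
    proof (cases "x1 = x2 \<and> y1 = - y2")
      case True thus ?thesis using P Q add_vert[of x1 x2 y1 y2 a] add_vert[of x2 x1 y2 y1 a] by auto
    next
      case False
      from line_points[OF c1 c2 False] obtain l c where
        y: "y1 = l*x1 + c" "y2 = l*x2 + c" and
        L: "LINE a b l c x1 x2 (l^2 - x1 - x2)"
        and E: "ec_add a (Some (x1, y1)) (Some (x2, y2)) = Some (l^2 - x1 - x2, -(l*(l^2 - x1 - x2) + c))"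
        by blast
      have L2: "LINE a b (-l) (-c) (l^2 - x1 - x2) x2 x1"
        using LINE_perm(4)[OF LINE_perm(3)[OF L]] by simp
      have "ec_add a (Some (l^2 - x1 - x2, (-l)*(l^2 - x1 - x2) + (-c))) (Some (x2, (-l)*x2 + (-c))) = Some (x1, -((-l)*x1 + (-c)))"
        using line_add[OF ns L2] .
      thus ?thesis using E P Q y by (simp add: algebra_simps)
    qed
  qed
qed


lemma cubic3:
  fixes e f g u1 u2 u3 :: rat
  assumes h1: "u1^3 + e*u1^2 + f*u1 + g = 0" and h2: "u2^3 + e*u2^2 + f*u2 + g = 0"
    and h3: "u3^3 + e*u3^2 + f*u3 + g = 0"
    and d12: "u1 \<noteq> u2" and d13: "u1 \<noteq> u3" and d23: "u2 \<noteq> u3"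
  shows "e = -(u1+u2+u3)" "f = u1*u2 + u1*u3 + u2*u3" "g = -(u1*u2*u3)"
proof -
  have "(u1 - u2) * (u1^2 + u1*u2 + u2^2 + e*(u1+u2) + f) = 0" using h1 h2 by algebra
  hence k12: "u1^2 + u1*u2 + u2^2 + e*(u1+u2) + f = 0" using d12 by simp
  have "(u1 - u3) * (u1^2 + u1*u3 + u3^2 + e*(u1+u3) + f) = 0" using h1 h3 by algebra
  hence k13: "u1^2 + u1*u3 + u3^2 + e*(u1+u3) + f = 0" using d13 by simp
  have "(u2 - u3) * (u1 + u2 + u3 + e) = 0" using k12 k13 by algebra
  hence "u1 + u2 + u3 + e = 0" using d23 by simp
  hence ee: "e = -(u1+u2+u3)" by algebra
  show "e = -(u1+u2+u3)" by (rule ee)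
  show ff: "f = u1*u2 + u1*u3 + u2*u3" using k12 ee by algebra
  show "g = -(u1*u2*u3)" using h1 ee ff by algebra
qed

lemma cubic_double:
  fixes e f g u1 u3 :: rat
  assumes h1: "u1^3 + e*u1^2 + f*u1 + g = 0" and h1': "3*u1^2 + 2*e*u1 + f = 0"
    and h3: "u3^3 + e*u3^2 + f*u3 + g = 0" and d: "u1 \<noteq> u3"
  shows "e = -(u1+u1+u3)" "f = u1*u1 + u1*u3 + u1*u3" "g = -(u1*u1*u3)"
proof -
  have "(u3 - u1) * (u3^2 + u1*u3 + u1^2 + e*(u3+u1) + f) = 0" using h1 h3 by algebra
  hence k: "u3^2 + u1*u3 + u1^2 + e*(u3+u1) + f = 0" using d by simp
  have "(u3 - u1) * (u3 + 2*u1 + e) = 0" using k h1' by algebra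
  hence "u3 + 2*u1 + e = 0" using d by simp
  hence ee: "e = -(u1+u1+u3)" by algebra
  show "e = -(u1+u1+u3)" by (rule ee)
  show ff: "f = u1*u1 + u1*u3 + u1*u3" using h1' ee by algebra
  show "g = -(u1*u1*u3)" using h1 ee ff by algebra
qed

lemma LINE_of_3:
  assumes "fc a b u1 = (l*u1 + c)^2" "fc a b u2 = (l*u2 + c)^2" "fc a b u3 = (l*u3 + c)^2"
    "u1 \<noteq> u2" "u1 \<noteq> u3" "u2 \<noteq> u3"
  shows "LINE a b l c u1 u2 u3"
proof -
  have h: "u^3 + (-(l^2))*u^2 + (a - 2*l*c)*u + (b - c^2) = 0" if "fc a b u = (l*u + c)^2" for u
    using that unfolding fc_def by algebra
  note r = cubic3[OF h[OF assms(1)] h[OF assms(2)] h[OF assms(3)] assms(4-6)]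
  show ?thesis unfolding LINE_def using r by (auto simp: algebra_simps)
qed

lemma LINE_of_double:
  assumes "fc a b u1 = (l*u1 + c)^2" "3*u1^2 + a = 2*l*(l*u1 + c)" "fc a b u3 = (l*u3 + c)^2"
    "u1 \<noteq> u3"
  shows "LINE a b l c u1 u1 u3"
proof -
  have h: "u^3 + (-(l^2))*u^2 + (a - 2*l*c)*u + (b - c^2) = 0" if "fc a b u = (l*u + c)^2" for u
    using that unfolding fc_def by algebra
  have h': "3*u1^2 + 2*(-(l^2))*u1 + (a - 2*l*c) = 0" using assms(2) by algebra
  note r = cubic_double[OF h[OF assms(1)] h' h[OF assms(3)] assms(4)]
  show ?thesis unfolding LINE_def using r by (auto simp: algebra_simps)
qed

lemma hfun:
  assumes L1: "LINE a b l1 c1 u1 u2 d" and L2: "LINE a b l2 c2 d u3 u4"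
    and v: "l1*d + c1 + l2*d + c2 = 0"
  shows "(l1*l2 + d) - (l1+l2)*l1 = -(u1+u2)"
    "(a + l1*c2 + l2*c1 + (l1*l2+d)*d) - (l1+l2)*c1 = u1*u2"
    "(l1*l2 + d) - (l1+l2)*l2 = -(u3+u4)"
    "(a + l1*c2 + l2*c1 + (l1*l2+d)*d) - (l1+l2)*c2 = u3*u4"
proof -
  from L1 have e1: "u1 + u2 + d = l1^2" "u1*u2 + u1*d + u2*d = a - 2*l1*c1" unfolding LINE_def by auto
  from L2 have e2: "d + u3 + u4 = l2^2" "d*u3 + d*u4 + u3*u4 = a - 2*l2*c2" unfolding LINE_def by auto
  show "(l1*l2 + d) - (l1+l2)*l1 = -(u1+u2)" using e1 by algebra
  show "(l1*l2 + d) - (l1+l2)*l2 = -(u3+u4)" using e2 by algebra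
  show "(a + l1*c2 + l2*c1 + (l1*l2+d)*d) - (l1+l2)*c1 = u1*u2" using e1 v by algebra
  show "(a + l1*c2 + l2*c1 + (l1*l2+d)*d) - (l1+l2)*c2 = u3*u4" using e2 v by algebra
qed


lemma assoc_main:
  assumes ns: "4*a^3 + 27*b^2 \<noteq> 0"
   and ca: "ya^2 = fc a b xa" and cb: "yb^2 = fc a b xb" and cc: "yc^2 = fc a b xc"
   and nAB: "\<not> (xa = xb \<and> ya = - yb)" and nBC: "\<not> (xb = xc \<and> yb = - yc)" and xac: "xa \<noteq> xc"
   and D: "ec_add a (Some (xa, ya)) (Some (xb, yb)) = Some (xd, yd)" and nDC: "\<not> (xd = xc \<and> yd = - yc)"
   and E: "ec_add a (Some (xb, yb)) (Some (xc, yc)) = Some (xe, ye)" and nAE: "\<not> (xa = xe \<and> ya = - ye)"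
   and cs: "(xa \<noteq> xb \<and> xb \<noteq> xc) \<or> (xa = xb \<and> ya = yb \<and> xb \<noteq> xc)"
  shows "ec_add a (Some (xd, yd)) (Some (xc, yc)) = ec_add a (Some (xa, ya)) (Some (xe, ye))"
proof -
  obtain l1 c1 where y1: "ya = l1*xa + c1" "yb = l1*xb + c1" and L1: "LINE a b l1 c1 xa xb (l1^2 - xa - xb)"
    and D1: "ec_add a (Some (xa, ya)) (Some (xb, yb)) = Some (l1^2 - xa - xb, -(l1*(l1^2 - xa - xb) + c1))"
    using line_points[OF ca cb nAB] by blast
  have xd: "xd = l1^2 - xa - xb" and yd: "yd = -(l1*xd + c1)" using D D1 by auto
  have L1': "LINE a b l1 c1 xa xb xd" using L1 xd by simp
  have "yd^2 = (l1*xd + c1)^2" using yd by algebra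
  hence cd: "yd^2 = fc a b xd" using LINE_fc(3)[OF L1'] by simp
  obtain l2 c2 where y2: "yd = l2*xd + c2" "yc = l2*xc + c2" and L2: "LINE a b l2 c2 xd xc (l2^2 - xd - xc)"
    and S1: "ec_add a (Some (xd, yd)) (Some (xc, yc)) = Some (l2^2 - xd - xc, -(l2*(l2^2 - xd - xc) + c2))"
    using line_points[OF cd cc nDC] by blast
  obtain l3 c3 where y3: "yb = l3*xb + c3" "yc = l3*xc + c3" and L3: "LINE a b l3 c3 xb xc (l3^2 - xb - xc)"
    and E1: "ec_add a (Some (xb, yb)) (Some (xc, yc)) = Some (l3^2 - xb - xc, -(l3*(l3^2 - xb - xc) + c3))"
    using line_points[OF cb cc nBC] by blast
  have xe: "xe = l3^2 - xb - xc" and ye: "ye = -(l3*xe + c3)" using E E1 by auto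
  have L3': "LINE a b l3 c3 xb xc xe" using L3 xe by simp
  have "ye^2 = (l3*xe + c3)^2" using ye by algebra
  hence ce: "ye^2 = fc a b xe" using LINE_fc(3)[OF L3'] by simp
  obtain l4 c4 where y4: "ya = l4*xa + c4" "ye = l4*xe + c4" and L4: "LINE a b l4 c4 xa xe (l4^2 - xa - xe)"
    and S2: "ec_add a (Some (xa, ya)) (Some (xe, ye)) = Some (l4^2 - xa - xe, -(l4*(l4^2 - xa - xe) + c4))"
    using line_points[OF ca ce nAE] by blast
  define s where "s = l2^2 - xd - xc"
  define s' where "s' = l4^2 - xa - xe"
  have L2': "LINE a b l2 c2 xd xc s" using L2 s_def by simp
  have L4': "LINE a b l4 c4 xe xa s'" using LINE_perm(1)[OF L4] s'_def by simp
  have v1: "l1*xd + c1 + l2*xd + c2 = 0" using yd y2(1) by algebra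
  have v2: "l3*xe + c3 + l4*xe + c4 = 0" using ye y4(2) by algebra
  define g where "g = l1 + l2"
  define al where "al = l1*l2 + xd"
  define be where "be = a + l1*c2 + l2*c1 + al*xd"
  define g' where "g' = l3 + l4"
  define al' where "al' = l3*l4 + xe"
  define be' where "be' = a + l3*c4 + l4*c3 + al'*xe"
  have H1: "al - g*l1 = -(xa+xb)" "be - g*c1 = xa*xb" "al - g*l2 = -(xc+s)" "be - g*c2 = xc*s"
    using hfun[OF L1' L2' v1] unfolding g_def al_def be_def by auto
  have K1: "al' - g'*l3 = -(xb+xc)" "be' - g'*c3 = xb*xc" "al' - g'*l4 = -(xa+s')" "be' - g'*c4 = xa*s'"
    using hfun[OF L3' L4' v2] unfolding g'_def al'_def be'_def by auto
  have hA: "xa^2 + al*xa + be = g*ya" using H1(1,2) y1(1) by algebra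
  have hB: "xb^2 + al*xb + be = g*yb" using H1(1,2) y1(2) by algebra
  have hC: "xc^2 + al*xc + be = g*yc" using H1(3,4) y2(2) by algebra
  have hS: "s^2 + al*s + be = g*(l2*s + c2)" using H1(3,4) by algebra
  have hA': "xa^2 + al'*xa + be' = g'*ya" using K1(3,4) y4(1) by algebra
  have hB': "xb^2 + al'*xb + be' = g'*yb" using K1(1,2) y3(1) by algebra
  have hC': "xc^2 + al'*xc + be' = g'*yc" using K1(1,2) y3(2) by algebra
  have hS': "s'^2 + al'*s' + be' = g'*(l4*s' + c4)" using K1(3,4) by algebra
  have sf: "s = g^2 - 2*al - xa - xb - xc" using H1(1,3) unfolding g_def by algebra
  have sf': "s' = g'^2 - 2*al' - xa - xb - xc" using K1(1,3) unfolding g'_def by algebra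
  have g0: "g \<noteq> 0"
  proof
    assume g: "g = 0"
    hence l2: "l2 = -l1" unfolding g_def by simp
    hence c2: "c2 = -c1" using v1 by algebra
    have L2n: "LINE a b l1 c1 xd xc s" using LINE_perm(4)[OF L2'] l2 c2 by simp
    from L1' have e1: "xa + xb + xd = l1^2" "xa*xb + xa*xd + xb*xd = a - 2*l1*c1" "xa*xb*xd = c1^2 - b"
      unfolding LINE_def by auto
    from L2n have e2: "xd + xc + s = l1^2" "xd*xc + xd*s + xc*s = a - 2*l1*c1" "xd*xc*s = c1^2 - b"
      unfolding LINE_def by auto
    have ycn: "yc = -(l1*xc + c1)" using y2(2) l2 c2 by simp
    have "(xc - xa)*(xc - xb)*(xc - xd) = 0" using e1 e2 by algebra
    hence "xc = xa \<or> xc = xb \<or> xc = xd" by auto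
    thus False
    proof (elim disjE)
      assume "xc = xa" thus False using xac by simp
    next
      assume "xc = xb" thus False using nBC ycn y1(2) by auto
    next
      assume xcd: "xc = xd"
      have "(xd - xa)*(xd - xb) = 0" using e1 e2 xcd by algebra
      hence "xd = xa \<or> xd = xb" by auto
      thus False
      proof
        assume "xd = xa" thus False using xcd xac by simp
      next
        assume "xd = xb" thus False using xcd nBC ycn y1(2) by auto
      qed
    qed
  qed
  have g0': "g' \<noteq> 0"
  proof
    assume g: "g' = 0"
    hence l4: "l4 = -l3" unfolding g'_def by simp
    hence c4: "c4 = -c3" using v2 by algebra
    have L4n: "LINE a b l3 c3 xe xa s'" using LINE_perm(4)[OF L4'] l4 c4 by simp
    from L3' have e1: "xb + xc + xe = l3^2" "xb*xc + xb*xe + xc*xe = a - 2*l3*c3" "xb*xc*xe = c3^2 - b"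
      unfolding LINE_def by auto
    from L4n have e2: "xe + xa + s' = l3^2" "xe*xa + xe*s' + xa*s' = a - 2*l3*c3" "xe*xa*s' = c3^2 - b"
      unfolding LINE_def by auto
    have yan: "ya = -(l3*xa + c3)" using y4(1) l4 c4 by simp
    have "(xa - xb)*(xa - xc)*(xa - xe) = 0" using e1 e2 by algebra
    hence "xa = xb \<or> xa = xc \<or> xa = xe" by auto
    thus False
    proof (elim disjE)
      assume "xa = xb" thus False using nAB yan y3(1) by auto
    next
      assume "xa = xc" thus False using xac by simp
    next
      assume xae: "xa = xe"
      have "(xe - xb)*(xe - xc) = 0" using e1 e2 xae by algebra
      hence "xe = xb \<or> xe = xc" by auto
      thus False
      proof
        assume "xe = xb" thus False using xae nAB yan y3(1) by auto
      next
        assume "xe = xc" thus False using xae xac by simp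
      qed
    qed
  qed
  define p where "p = al - al'"
  define u where "u = be - be'"
  define r where "r = g - g'"
  have pA: "p*xa + u = r*ya" using hA hA' unfolding p_def u_def r_def by algebra
  have pB: "p*xb + u = r*yb" using hB hB' unfolding p_def u_def r_def by algebra
  have pC: "p*xc + u = r*yc" using hC hC' unfolding p_def u_def r_def by algebra
  have uniq: "p = 0 \<and> u = 0 \<and> r = 0"
    using cs
  proof
    assume cs1: "xa \<noteq> xb \<and> xb \<noteq> xc"
    show ?thesis
    proof (cases "r = 0")
      case True
      have "p*(xa - xb) = 0" using pA pB True by algebra
      hence "p = 0" using cs1 by simp
      thus ?thesis using pA True by simp
    next
      case False
      define l where "l = p / r"
      define c where "c = u / r"
      have ya': "ya = l*xa + c" using pA False unfolding l_def c_def by (simp add: field_simps)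
      have yb': "yb = l*xb + c" using pB False unfolding l_def c_def by (simp add: field_simps)
      have yc': "yc = l*xc + c" using pC False unfolding l_def c_def by (simp add: field_simps)
      have L: "LINE a b l c xa xb xc"
        using LINE_of_3[of a b xa l c xb xc] ca cb cc ya' yb' yc' cs1 xac by simp
      have "ec_add a (Some (xa, ya)) (Some (xb, yb)) = Some (xc, -yc)"
        using line_add[OF ns L] ya' yb' yc' by simp
      thus ?thesis using D nDC by simp
    qed
  next
    assume cs2: "xa = xb \<and> ya = yb \<and> xb \<noteq> xc"
    hence xb: "xb = xa" and yb: "yb = ya" and xac': "xa \<noteq> xc" by auto
    have ya0: "ya \<noteq> 0" using nAB xb yb by auto
    from L1' have e1: "xa + xa + xd = l1^2" "xa*xa + xa*xd + xa*xd = a - 2*l1*c1"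
      unfolding LINE_def xb by auto
    have d1: "3*xa^2 + a = 2*l1*ya" using e1 y1(1) by algebra
    have tanh: "2*xa + al = g*l1" using H1(1) xb by algebra
    from L3' have e3: "xa + xc + xe = l3^2" "xa*xc + xa*xe + xc*xe = a - 2*l3*c3"
      unfolding LINE_def xb by auto
    have y3a: "ya = l3*xa + c3" using y3(1) xb yb by simp
    have st1: "(xa - xc)*(xa - xe) = 2*ya*(l1 - l3)" using e3 y3a d1 by algebra
    have st2: "g'*(xe - xa) = -2*ya" using y4 ye y3a unfolding g'_def by algebra
    have xae: "xa \<noteq> xe" using st2 ya0 by auto
    have st3: "(xa - xe) * (g'*(l1 - l3) - (xa - xc)) = 0" using st1 st2 by algebra
    have st4: "g'*(l1 - l3) = xa - xc" using st3 xae by simp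
    have tanh': "2*xa + al' = g'*l1" using st4 K1(1) xb by algebra
    have pr: "p = r*l1" using tanh tanh' unfolding p_def r_def by algebra
    show ?thesis
    proof (cases "r = 0")
      case True
      thus ?thesis using pr pA by simp
    next
      case False
      define c where "c = u / r"
      have ya': "ya = l1*xa + c" using pA pr False unfolding c_def by (simp add: field_simps)
      have yc': "yc = l1*xc + c" using pC pr False unfolding c_def by (simp add: field_simps)
      have L: "LINE a b l1 c xa xa xc"
        using LINE_of_double[of a b xa l1 c xc] ca cc ya' yc' d1 xac' by simp
      have "ec_add a (Some (xa, ya)) (Some (xa, ya)) = Some (xc, -yc)"
        using line_add[OF ns L] ya' yc' by simp
      thus ?thesis using D nDC xb yb by simp
    qed
  qed
  hence eq: "al = al'" "be = be'" "g = g'" unfolding p_def u_def r_def by auto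
  have ss: "s = s'" using sf sf' eq by simp
  have "g*(l2*s + c2) = g*(l4*s + c4)" using hS hS' eq ss by metis
  hence yy: "l2*s + c2 = l4*s + c4" using g0 by simp
  show ?thesis unfolding S1 S2 s_def[symmetric] s'_def[symmetric] using ss yy by simp
qed


lemma add_None_iff:
  assumes "y1^2 = fc a b x1" "y2^2 = fc a b x2"
  shows "ec_add a (Some (x1, y1)) (Some (x2, y2)) = None \<longleftrightarrow> (x1 = x2 \<and> y1 = - y2)"
proof
  assume h: "ec_add a (Some (x1, y1)) (Some (x2, y2)) = None"
  show "x1 = x2 \<and> y1 = - y2"
  proof (rule ccontr)
    assume "\<not> (x1 = x2 \<and> y1 = - y2)"
    from line_points[OF assms this] obtain l c where
      "ec_add a (Some (x1, y1)) (Some (x2, y2)) = Some (l^2 - x1 - x2, -(l*(l^2 - x1 - x2) + c))" by blast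
    thus False using h by simp
  qed
qed (auto simp: add_vert)

lemma same_x:
  assumes "y1^2 = fc a b x1" "y2^2 = fc a b x2" "x1 = x2"
  shows "y2 = y1 \<or> y2 = - y1"
proof -
  have "y2^2 = y1^2" using assms by simp
  thus ?thesis by (simp add: power2_eq_iff)
qed

lemma assoc_aff:
  assumes ns: "4*a^3 + 27*b^2 \<noteq> 0"
   and A: "A = Some (xa, ya)" and B: "B = Some (xb, yb)" and C: "C = Some (xc, yc)"
   and ca: "ya^2 = fc a b xa" and cb: "yb^2 = fc a b xb" and cc: "yc^2 = fc a b xc"
   and n1: "B \<noteq> negp A" and n2: "C \<noteq> negp B" and n3: "C \<noteq> negp A" and n4: "C \<noteq> A"
   and n5: "ec_add a A B \<noteq> negp C" and n6: "A \<noteq> negp (ec_add a B C)"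
   and cs: "(xa \<noteq> xb \<and> xb \<noteq> xc) \<or> A = B"
  shows "ec_add a (ec_add a A B) C = ec_add a A (ec_add a B C)"
proof -
  have nAB: "\<not> (xa = xb \<and> ya = - yb)" using n1 A B by auto
  have nBC: "\<not> (xb = xc \<and> yb = - yc)" using n2 B C by auto
  have xac: "xa \<noteq> xc"
  proof
    assume h: "xa = xc"
    from same_x[OF ca cc h] show False using n3 n4 A C h by auto
  qed
  have "ec_add a A B \<noteq> None" using add_None_iff[OF ca cb] nAB A B by simp
  then obtain xd yd where D: "ec_add a A B = Some (xd, yd)" by (cases "ec_add a A B" rule: affine_cases) auto
  have "ec_add a B C \<noteq> None" using add_None_iff[OF cb cc] nBC B C by simp
  then obtain xe ye where E: "ec_add a B C = Some (xe, ye)" by (cases "ec_add a B C" rule: affine_cases) auto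
  have nDC: "\<not> (xd = xc \<and> yd = - yc)" using n5 D C by auto
  have nAE: "\<not> (xa = xe \<and> ya = - ye)" using n6 A E by auto
  have cs': "(xa \<noteq> xb \<and> xb \<noteq> xc) \<or> (xa = xb \<and> ya = yb \<and> xb \<noteq> xc)"
    using cs A B xac by auto
  show ?thesis unfolding D E using assoc_main[OF ns ca cb cc nAB nBC xac _ nDC _ nAE cs'] D E A B C
    by simp
qed

lemma add_assoc:
  assumes ns: "4*a^3 + 27*b^2 \<noteq> 0"
    and oA: "on_curve a b A" and oB: "on_curve a b B" and oC: "on_curve a b C"
  shows "ec_add a (ec_add a A B) C = ec_add a A (ec_add a B C)"
proof -
  note comm = add_comm[OF ns] and cl = add_closed and canc = add_cancel[OF ns]
  note ng = negp_add[OF ns] and onn = on_curve_negp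
  show ?thesis
  proof (cases "A = None \<or> B = None \<or> C = None")
    case True thus ?thesis by auto
  next
    case False
    then obtain xa ya xb yb xc yc where A: "A = Some (xa, ya)" and B: "B = Some (xb, yb)"
      and C: "C = Some (xc, yc)" by (metis affine_cases)
    have ca: "ya^2 = fc a b xa" and cb: "yb^2 = fc a b xb" and cc: "yc^2 = fc a b xc"
      using oA oB oC A B C by auto
    show ?thesis
    proof (cases "B = negp A")
      case True
      have "ec_add a A (ec_add a (negp A) C) = ec_add a (ec_add a (negp A) C) A"
        using comm oA cl[OF onn[OF oA] oC] by simp
      also have "\<dots> = ec_add a (ec_add a C (negp A)) (negp (negp A))"
        using comm[OF onn[OF oA] oC] by simp
      also have "\<dots> = C" using canc[OF oC onn[OF oA]] .
      finally show ?thesis using True by (simp add: add_negp)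
    next
      case n1: False
      show ?thesis
      proof (cases "C = negp B")
        case True
        thus ?thesis using canc[OF oA oB] by (simp add: add_negp)
      next
        case n2: False
        show ?thesis
        proof (cases "C = negp A")
          case True
          have l: "ec_add a (ec_add a A B) (negp A) = B"
            using comm[OF oA oB] canc[OF oB oA] by simp
          have "ec_add a A (ec_add a B (negp A)) = ec_add a (ec_add a B (negp A)) (negp (negp A))"
            using comm[OF oA cl[OF oB onn[OF oA]]] by simp
          also have "\<dots> = B" using canc[OF oB onn[OF oA]] .
          finally show ?thesis using True l by simp
        next
          case n3: False
          show ?thesis
          proof (cases "C = A")
            case True
            thus ?thesis using comm[OF cl[OF oA oB] oA] comm[OF oA oB] by simp
          next
            case n4: False
            show ?thesis
            proof (cases "ec_add a A B = negp C")
              case True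
              have cC: "C = negp (ec_add a A B)" using True by (metis negp_negp)
              have "ec_add a B C = negp (ec_add a (negp B) (ec_add a A B))"
                using ng[OF onn[OF oB] cl[OF oA oB]] cC by simp
              also have "\<dots> = negp (ec_add a (ec_add a A B) (negp B))"
                using comm[OF onn[OF oB] cl[OF oA oB]] by simp
              also have "\<dots> = negp A" using canc[OF oA oB] by simp
              finally have "ec_add a B C = negp A" .
              moreover have "ec_add a (negp C) C = None"
                using comm[OF onn[OF oC] oC] add_negp by simp
              ultimately show ?thesis using True by (simp add: add_negp)
            next
              case n5: False
              show ?thesis
              proof (cases "A = negp (ec_add a B C)")
                case True
                have "ec_add a A B = negp (ec_add a (ec_add a B C) (negp B))"
                  using ng[OF cl[OF oB oC] onn[OF oB]] True by simp
                also have "\<dots> = negp (ec_add a (ec_add a C B) (negp B))"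
                  using comm[OF oB oC] by simp
                also have "\<dots> = negp C" using canc[OF oC oB] by simp
                finally have ab: "ec_add a A B = negp C" .
                hence False using n5 by simp
                thus ?thesis ..
              next
                case n6: False
                show ?thesis
                proof (cases "xa \<noteq> xb \<and> xb \<noteq> xc \<or> A = B")
                  case True
                  show ?thesis using assoc_aff[OF ns A B C ca cb cc n1 n2 n3 n4 n5 n6 True] .
                next
                  case False
                  have xbc: "xb = xc"
                  proof (rule ccontr)
                    assume "xb \<noteq> xc"
                    hence xab: "xa = xb" and AB: "A \<noteq> B" using False by auto
                    from same_x[OF ca cb xab] show False using AB n1 A B xab by auto
                  qed
                  have BC: "B = C" using same_x[OF cb cc xbc] n2 B C xbc by auto
                  have m1: "A \<noteq> negp B" using n1 by (metis negp_negp)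
                  have m2: "B \<noteq> negp C" using n2 BC by auto
                  have m3: "A \<noteq> negp C" using n3 by (metis negp_negp)
                  have m4: "A \<noteq> C" using n4 by simp
                  have m5: "ec_add a C B \<noteq> negp A"
                    using n6 comm[OF oB oC] by (metis negp_negp)
                  have m6: "C \<noteq> negp (ec_add a B A)"
                    using n5 comm[OF oA oB] by (metis negp_negp)
                  have m7: "(xc \<noteq> xb \<and> xb \<noteq> xa) \<or> C = B" using BC by simp
                  have r: "ec_add a (ec_add a C B) A = ec_add a C (ec_add a B A)"
                    using assoc_aff[OF ns C B A cc cb ca m2 m1 m3 m4 m5 m6 m7] .
                  have "ec_add a (ec_add a A B) C = ec_add a C (ec_add a B A)"
                    using comm[OF cl[OF oA oB] oC] comm[OF oA oB] by simp
                  also have "\<dots> = ec_add a (ec_add a C B) A" using r by simp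
                  also have "\<dots> = ec_add a A (ec_add a B C)"
                    using comm[OF cl[OF oC oB] oA] comm[OF oB oC] by simp
                  finally show ?thesis .
                qed
              qed
            qed
          qed
        qed
      qed
    qed
  qed
qed


lemma mult_closed: "on_curve a b P \<Longrightarrow> on_curve a b (ec_mult a n P)"
  by (induction n) (auto intro: add_closed)

lemma mult_add:
  assumes ns: "4*a^3 + 27*b^2 \<noteq> 0" and oP: "on_curve a b P"
  shows "ec_mult a (m + n) P = ec_add a (ec_mult a m P) (ec_mult a n P)"
proof (induction m)
  case 0 thus ?case by simp
next
  case (Suc m)
  have "ec_mult a (Suc m + n) P = ec_add a P (ec_add a (ec_mult a m P) (ec_mult a n P))"
    using Suc by simp
  also have "\<dots> = ec_add a (ec_add a P (ec_mult a m P)) (ec_mult a n P)"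
    using add_assoc[OF ns oP mult_closed[OF oP] mult_closed[OF oP]] by simp
  finally show ?case by simp
qed

lemma mult_double:
  assumes ns: "4*a^3 + 27*b^2 \<noteq> 0" and oP: "on_curve a b P"
  shows "ec_mult a (2*k) P = ec_add a (ec_mult a k P) (ec_mult a k P)"
  using mult_add[OF ns oP, of k k] by (simp add: mult_2)

lemma mult_zero_mult:
  assumes ns: "4*a^3 + 27*b^2 \<noteq> 0" and oP: "on_curve a b P" and n: "ec_mult a n P = None"
  shows "ec_mult a (n*q) P = None"
proof (induction q)
  case 0 thus ?case by simp
next
  case (Suc q)
  have "ec_mult a (n * Suc q) P = ec_mult a (n + n*q) P" by simp
  also have "\<dots> = None" using mult_add[OF ns oP, of n "n*q"] n Suc by simp
  finally show ?case .
qed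

lemma mult_mod:
  assumes ns: "4*a^3 + 27*b^2 \<noteq> 0" and oP: "on_curve a b P" and n: "ec_mult a n P = None"
  shows "ec_mult a k P = ec_mult a (k mod n) P"
proof -
  have "ec_mult a k P = ec_mult a (n * (k div n) + k mod n) P" by simp
  also have "\<dots> = ec_mult a (k mod n) P"
    using mult_add[OF ns oP, of "n * (k div n)" "k mod n"] mult_zero_mult[OF ns oP n] by simp
  finally show ?thesis .
qed



definition Z2 :: "rat \<Rightarrow> bool" where
  "Z2 q \<longleftrightarrow> (\<exists>m n. odd n \<and> q = of_int m / of_int n)"

definition U2 :: "rat \<Rightarrow> bool" where
  "U2 q \<longleftrightarrow> (\<exists>m n. odd m \<and> odd n \<and> q = of_int m / of_int n)"

lemma Z2_of_int[simp]: "Z2 (of_int m)"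
  unfolding Z2_def by (rule exI[of _ m], rule exI[of _ 1]) simp

lemma Z2_0[simp]: "Z2 0" and Z2_1[simp]: "Z2 1" and Z2_numeral[simp]: "Z2 (numeral k)"
  using Z2_of_int[of 0] Z2_of_int[of 1] Z2_of_int[of "numeral k"] by simp_all

lemma Z2_add[intro]: assumes "Z2 p" "Z2 q" shows "Z2 (p + q)"
proof -
  obtain m1 n1 m2 n2 where h: "odd n1" "p = of_int m1 / of_int n1" "odd n2" "q = of_int m2 / of_int n2"
    using assms unfolding Z2_def by blast
  have n1: "(of_int n1 :: rat) \<noteq> 0" and n2: "(of_int n2 :: rat) \<noteq> 0" using h by (auto elim: oddE)
  have "p + q = of_int (m1*n2 + m2*n1) / of_int (n1*n2)" using h n1 n2 by (simp add: field_simps)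
  moreover have "odd (n1*n2)" using h by simp
  ultimately show ?thesis unfolding Z2_def by blast
qed

lemma Z2_mult[intro]: assumes "Z2 p" "Z2 q" shows "Z2 (p * q)"
proof -
  obtain m1 n1 m2 n2 where h: "odd n1" "p = of_int m1 / of_int n1" "odd n2" "q = of_int m2 / of_int n2"
    using assms unfolding Z2_def by blast
  have "p * q = of_int (m1*m2) / of_int (n1*n2)" using h by simp
  moreover have "odd (n1*n2)" using h by simp
  ultimately show ?thesis unfolding Z2_def by blast
qed

lemma Z2_minus[intro]: assumes "Z2 p" shows "Z2 (- p)"
proof -
  obtain m n where h: "odd n" "p = of_int m / of_int n" using assms unfolding Z2_def by blast
  have "- p = of_int (-m) / of_int n" using h by simp
  thus ?thesis using h unfolding Z2_def by blast
qed

lemma Z2_diff[intro]: "Z2 p \<Longrightarrow> Z2 q \<Longrightarrow> Z2 (p - q)"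
  using Z2_add[of p "-q"] Z2_minus[of q] by simp

lemma Z2_power[intro]: "Z2 p \<Longrightarrow> Z2 (p ^ n)"
  by (induction n) auto

lemma Z2_pow2[simp]: "Z2 (2^n)"
  using Z2_power[of 2 n] by simp

lemma U2_Z2: "U2 q \<Longrightarrow> Z2 q"
  unfolding U2_def Z2_def by blast

lemma U2_nz: "U2 q \<Longrightarrow> q \<noteq> 0"
  unfolding U2_def by (auto elim: oddE)

lemma U2_mult[intro]: assumes "U2 p" "U2 q" shows "U2 (p * q)"
proof -
  obtain m1 n1 m2 n2 where h: "odd m1" "odd n1" "p = of_int m1 / of_int n1" "odd m2" "odd n2" "q = of_int m2 / of_int n2"
    using assms unfolding U2_def by blast
  have "p * q = of_int (m1*m2) / of_int (n1*n2)" using h by simp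
  moreover have "odd (n1*n2)" "odd (m1*m2)" using h by simp_all
  ultimately show ?thesis unfolding U2_def by blast
qed

lemma U2_inv[intro]: assumes "U2 p" shows "U2 (1 / p)"
proof -
  obtain m n where h: "odd m" "odd n" "p = of_int m / of_int n" using assms unfolding U2_def by blast
  have "1 / p = of_int n / of_int m" using h by simp
  thus ?thesis using h unfolding U2_def by blast
qed

lemma U2_div[intro]: "U2 p \<Longrightarrow> U2 q \<Longrightarrow> U2 (p / q)"
  using U2_mult[of p "1/q"] U2_inv[of q] by simp

lemma Z2_div_U2[intro]: "Z2 p \<Longrightarrow> U2 q \<Longrightarrow> Z2 (p / q)"
  using Z2_mult[of p "1/q"] U2_Z2[OF U2_inv[of q]] by simp

lemma U2_power[intro]: "U2 p \<Longrightarrow> U2 (p ^ n)"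
proof (induction n)
  case 0 show ?case unfolding U2_def by (rule exI[of _ 1], rule exI[of _ 1]) simp
next
  case (Suc n) thus ?case by auto
qed

lemma U2_char: "U2 u \<longleftrightarrow> (\<exists>z. Z2 z \<and> u = 1 + 2*z)"
proof
  assume "U2 u"
  then obtain m n where h: "odd m" "odd n" "u = of_int m / of_int n" unfolding U2_def by blast
  have n0: "(of_int n :: rat) \<noteq> 0" using h by (auto elim: oddE)
  obtain k where k: "m - n = 2*k" using h by (metis even_diff odd_add evenE add.commute diff_add_cancel)
  have "u = 1 + 2 * (of_int k / of_int n)"
  proof -
    have "of_int m = (of_int n + 2 * of_int k :: rat)" using k by (metis (mono_tags) add.commute diff_add_cancel of_int_add of_int_mult of_int_numeral)
    thus ?thesis using h n0 by (simp add: field_simps)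
  qed
  moreover have "Z2 (of_int k / of_int n)" using h unfolding Z2_def by blast
  ultimately show "\<exists>z. Z2 z \<and> u = 1 + 2*z" by blast
next
  assume "\<exists>z. Z2 z \<and> u = 1 + 2*z"
  then obtain z m n where h: "odd n" "z = of_int m / of_int n" "u = 1 + 2*z" unfolding Z2_def by blast
  have n0: "(of_int n :: rat) \<noteq> 0" using h by (auto elim: oddE)
  have "u = of_int (n + 2*m) / of_int n" using h n0 by (simp add: field_simps)
  moreover have "odd (n + 2*m)" using h by simp
  ultimately show "U2 u" unfolding U2_def using h by blast
qed

lemma U2_add2[intro]: assumes "U2 u" "Z2 z" shows "U2 (u + 2*z)"
proof -
  obtain z' where "Z2 z'" "u = 1 + 2*z'" using assms U2_char by blast
  hence "u + 2*z = 1 + 2*(z' + z)" "Z2 (z' + z)" using assms by (auto simp: algebra_simps)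
  thus ?thesis using U2_char by blast
qed

lemma U2_minus[intro]: assumes "U2 u" shows "U2 (- u)"
proof -
  obtain m n where h: "odd m" "odd n" "u = of_int m / of_int n" using assms unfolding U2_def by blast
  have "- u = of_int (-m) / of_int n" using h by simp
  moreover have "odd (-m)" using h by simp
  ultimately show ?thesis using h unfolding U2_def by blast
qed

lemma U2_odd_int: "odd m \<Longrightarrow> U2 (of_int m)"
  unfolding U2_def by (rule exI[of _ m], rule exI[of _ 1]) simp

lemma U2_not_even: assumes "U2 u" "Z2 z" shows "u \<noteq> 2 * z"
proof
  assume e: "u = 2 * z"
  obtain m n where h: "odd m" "odd n" "u = of_int m / of_int n" using assms unfolding U2_def by blast
  obtain m' n' where h': "odd n'" "z = of_int m' / of_int n'" using assms unfolding Z2_def by blast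
  have n0: "(of_int n :: rat) \<noteq> 0" "(of_int n' :: rat) \<noteq> 0" using h h' by (auto elim: oddE)
  have "(of_int (m * n') :: rat) = of_int (2 * m' * n)" using e h h' n0 by (simp add: field_simps)
  hence "m * n' = 2 * m' * n" by (simp only: of_int_eq_iff)
  moreover have "odd (m * n')" using h h' by simp
  ultimately show False by simp
qed

lemma Z2_split: assumes "Z2 q" shows "U2 q \<or> (\<exists>z. Z2 z \<and> q = 2 * z)"
proof -
  obtain m n where h: "odd n" "q = of_int m / of_int n" using assms unfolding Z2_def by blast
  show ?thesis
  proof (cases "odd m")
    case True thus ?thesis using h unfolding U2_def by blast
  next
    case False
    then obtain k where "m = 2 * k" by (auto elim: evenE)
    hence "q = 2 * (of_int k / of_int n)" using h by simp
    moreover have "Z2 (of_int k / of_int n)" using h unfolding Z2_def by blast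
    ultimately show ?thesis by blast
  qed
qed

lemma int_2_decomp: "(m::int) \<noteq> 0 \<Longrightarrow> \<exists>j m'. odd m' \<and> m = 2^j * m'"
proof (induction "nat \<bar>m\<bar>" arbitrary: m rule: less_induct)
  case less
  show ?case
  proof (cases "odd m")
    case True thus ?thesis by (rule_tac x=0 in exI) auto
  next
    case False
    then obtain k where k: "m = 2 * k" by (auto elim: evenE)
    have "k \<noteq> 0" using less k by simp
    moreover have "nat \<bar>k\<bar> < nat \<bar>m\<bar>" using k \<open>k \<noteq> 0\<close> by simp
    ultimately obtain j m' where "odd m'" "k = 2^j * m'" using less by blast
    thus ?thesis using k by (rule_tac x="Suc j" in exI) auto
  qed
qed

lemma Z2_decomp: assumes "Z2 z" "z \<noteq> 0" shows "\<exists>j u. U2 u \<and> z = 2^j * u"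
proof -
  obtain m n where h: "odd n" "z = of_int m / of_int n" using assms unfolding Z2_def by blast
  have "m \<noteq> 0" using h assms by auto
  then obtain j m' where j: "odd m'" "m = 2^j * m'" using int_2_decomp by blast
  have "z = 2^j * (of_int m' / of_int n)" using h j by simp
  moreover have "U2 (of_int m' / of_int n)" using h j unfolding U2_def by blast
  ultimately show ?thesis by blast
qed

lemma rat_decomp: assumes "(q::rat) \<noteq> 0" shows "Z2 q \<or> (\<exists>k u. k \<ge> 1 \<and> U2 u \<and> q = u / 2^k)"
proof -
  obtain m n where mn: "q = of_int m / of_int n" "n > 0"
    using quotient_of_unique[of q] quotient_of_denom_pos by (metis Fract_of_int_quotient prod.collapse quotient_of_div)
  have "n \<noteq> 0" using mn by simp
  then obtain j n' where j: "odd n'" "n = 2^j * n'" using int_2_decomp by blast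
  have m0: "m \<noteq> 0" using assms mn by auto
  have Zq: "Z2 (of_int m / of_int n')" using j unfolding Z2_def by blast
  have nz: "of_int m / of_int n' \<noteq> (0::rat)" using m0 j by auto
  obtain i u where iu: "U2 u" "of_int m / of_int n' = 2^i * u" using Z2_decomp[OF Zq nz] by blast
  have q: "q = 2^i * u / 2^j" using mn j iu by (simp add: field_simps)
  show ?thesis
  proof (cases "i \<ge> j")
    case True
    hence "q = 2^(i-j) * u" using q by (simp add: power_diff)
    hence "Z2 q" using Z2_mult[OF Z2_pow2 U2_Z2[OF iu(1)]] by simp
    thus ?thesis ..
  next
    case False
    hence "q = u / 2^(j-i)" using q by (simp add: power_diff field_simps)
    moreover have "j - i \<ge> 1" using False by simp
    ultimately show ?thesis using iu by blast
  qed
qed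

lemma deep_unique:
  assumes "U2 u" "U2 u'" "u / 2^k = u' / (2::rat)^k'"
  shows "k = k'"
proof (rule ccontr)
  assume ne: "k \<noteq> k'"
  { fix u u' :: rat and k k' :: nat
    assume h: "U2 u" "U2 u'" "u / 2^k = u' / 2^k'" "k < k'"
    have "u' = u * 2^k' / 2^k" using h(3) by (simp add: field_simps)
    also have "\<dots> = u * 2^(k' - k)" using h(4) by (simp add: power_diff)
    also have "\<dots> = 2 * (u * 2^(k' - k - 1))"
      using h(4) by (metis Suc_diff_Suc Suc_leI diff_Suc_1 le_add_diff_inverse2 mult.left_commute power.simps(2) zero_less_diff)
    finally have "u' = 2 * (u * 2^(k' - k - 1))" .
    moreover have "Z2 (u * 2^(k' - k - 1))" using Z2_mult[OF U2_Z2[OF h(1)] Z2_pow2] by simp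
    ultimately have False using U2_not_even[OF h(2)] by blast }
  note * = this
  show False using ne assms *[of u u' k k'] *[of u' u k' k] by (metis linorder_neqE_nat)
qed

lemma deep_not_Z2:
  assumes "k \<ge> 1" "U2 u" shows "\<not> Z2 (u / 2^k)"
proof
  assume "Z2 (u / 2^k)"
  hence Z: "Z2 (2^(k-1) * (u / 2^k))" using Z2_mult[OF Z2_pow2] by blast
  have "u = 2 * (2^(k-1) * (u / 2^k))" using assms(1)
    by (simp add: field_simps) (metis One_nat_def Suc_pred power_Suc zero_less_one le_less_trans less_le_trans)
  thus False using U2_not_even[OF assms(2) Z] by blast
qed


definition Nw :: "rat \<Rightarrow> rat" where "Nw w = w^4 + 4*w^2 + 8*w + 1"
definition Dw :: "rat \<Rightarrow> rat" where "Dw w = 4*w^3 - 3*w^2 - 8*w - 4"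
definition deep :: "nat \<Rightarrow> rat \<Rightarrow> bool" where
  "deep k w \<longleftrightarrow> k \<ge> 1 \<and> (\<exists>u. U2 u \<and> w = u / 2^k)"

lemma U2_3: "U2 3"
  using U2_odd_int[of 3] by simp

lemma D1:
  assumes dk: "deep k w" and D0: "Dw w \<noteq> 0"
  shows "\<exists>k'>k. deep k' (Nw w / Dw w)"
proof -
  obtain u where u: "U2 u" "w = u / 2^k" and k1: "k \<ge> 1" using dk unfolding deep_def by blast
  define t :: rat where "t = 2^k"
  define t' :: rat where "t' = 2^(k-1)"
  have tt: "t = 2 * t'" unfolding t_def t'_def using k1
    by (metis Suc_diff_le diff_Suc_1 power_Suc)
  have t0: "t \<noteq> 0" unfolding t_def by simp
  have w: "w = u / t" using u unfolding t_def by simp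
  define NU where "NU = u^4 + 2*(2*u^2*t^2 + 4*u*t^3 + 8*t'^4)"
  have NUU: "U2 NU" unfolding NU_def t_def t'_def using u(1)
    by (intro U2_add2 U2_power Z2_add Z2_mult Z2_power) (auto intro: U2_Z2)
  have e1: "Nw w = (u^4 + 4*u^2*t^2 + 8*u*t^3 + t^4) / t^4" unfolding Nw_def w using t0
    by (simp add: field_simps) algebra
  have e2: "u^4 + 4*u^2*t^2 + 8*u*t^3 + t^4 = NU" unfolding NU_def using tt by algebra
  have Nw_eq: "Nw w = NU / t^4" using e1 e2 by simp
  consider "k = 1" | "k = 2" | "k \<ge> 3" using k1 by linarith
  thus ?thesis
  proof cases
    case 1
    hence t2: "t = 2" unfolding t_def by simp
    define DU where "DU = -3*u^2 + 2*(u^3 - 8*u - 8)"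
    have DUU: "U2 DU" unfolding DU_def using u(1) U2_3
      by (intro U2_add2 U2_minus U2_mult U2_power Z2_diff Z2_mult Z2_power Z2_add) (auto intro: U2_Z2)
    have Dw_eq: "Dw w = DU / 4" unfolding Dw_def DU_def w t2 by (simp add: field_simps)
    have "Nw w / Dw w = (NU / DU) / 2^2" unfolding Nw_eq Dw_eq t2 using U2_nz[OF DUU]
      by (simp add: field_simps)
    hence "deep 2 (Nw w / Dw w)" unfolding deep_def using U2_div[OF NUU DUU] by auto
    thus ?thesis using 1 by (intro exI[of _ 2]) auto
  next
    case 2
    hence t4: "t = 4" unfolding t_def by simp
    obtain z where z: "Z2 z" "u = 1 + 2*z" using u(1) U2_char by blast
    define Y where "Y = u^2*(z-1) - 16*u - 32"
    have f1: "Dw w = (u^3 - 3*u^2 - 32*u - 64) / 16" unfolding Dw_def w t4 by (simp add: field_simps)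
    have f2: "u^3 - 3*u^2 - 32*u - 64 = 2 * Y" unfolding Y_def using z(2) by algebra
    have Dw_eq: "Dw w = Y / 8" using f1 f2 by simp
    have Y0: "Y \<noteq> 0" using D0 Dw_eq by simp
    have YZ: "Z2 Y" unfolding Y_def using z(1) u(1) by (intro Z2_diff Z2_mult Z2_power) (auto intro: U2_Z2)
    obtain j u'' where ju: "U2 u''" "Y = 2^j * u''" using Z2_decomp[OF YZ Y0] by blast
    have "Nw w / Dw w = (NU / u'') / 2^(j+5)" unfolding Nw_eq Dw_eq t4 ju(2) using U2_nz[OF ju(1)]
      by (simp add: field_simps power_add)
    hence "deep (j+5) (Nw w / Dw w)" unfolding deep_def using U2_div[OF NUU ju(1)] by auto
    thus ?thesis using 2 by (intro exI[of _ "j+5"]) auto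
  next
    case 3
    define s :: rat where "s = 2^(k-3)"
    have kk: "k = (k - 3) + 3" using 3 by simp
    have "(2::rat)^k = 2^(k-3) * 2^3" by (subst kk, subst power_add) simp
    hence ts: "t = 8 * s" unfolding t_def s_def by simp
    define DU where "DU = u^3 + 2*(-3*u^2*s - 64*u*s^2 - 256*s^3)"
    have DUU: "U2 DU" unfolding DU_def s_def using u(1)
      by (intro U2_add2 U2_power Z2_diff Z2_mult Z2_power Z2_minus) (auto intro: U2_Z2)
    have g1: "Dw w = (4*u^3 - 3*u^2*t - 8*u*t^2 - 4*t^3) / t^3" unfolding Dw_def w using t0
      by (simp add: field_simps) algebra
    have g2: "4*u^3 - 3*u^2*t - 8*u*t^2 - 4*t^3 = 4 * DU" unfolding DU_def ts by algebra
    have Dw_eq: "Dw w = 4 * DU / t^3" using g1 g2 by simp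
    have h1: "Nw w / Dw w = (NU / DU) / (4 * t)" unfolding Nw_eq Dw_eq using U2_nz[OF DUU] t0
      by (simp add: field_simps) algebra
    have h2: "(2::rat)^(k+2) = 4 * t" unfolding t_def by (simp add: power_add)
    have "Nw w / Dw w = (NU / DU) / 2^(k+2)" using h1 h2 by simp
    hence "deep (k+2) (Nw w / Dw w)" unfolding deep_def using U2_div[OF NUU DUU] by auto
    thus ?thesis by (intro exI[of _ "k+2"]) auto
  qed
qed

lemma D2a:
  assumes z: "Z2 z" and w: "w = 2*z" and D0: "Dw w \<noteq> 0"
  shows "\<exists>k. deep k (Nw w / Dw w)"
proof -
  define NU where "NU = 1 + 2*(8*z^4 + 8*z^2 + 8*z)"
  have NUU: "U2 NU" unfolding NU_def using z
    by (intro U2_add2 Z2_add Z2_mult Z2_power) (auto simp: U2_char)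
  define Y where "Y = 8*z^3 - 3*z^2 - 4*z - 1"
  have Nw_eq: "Nw w = NU" unfolding Nw_def NU_def w by algebra
  have Dw_eq: "Dw w = 4 * Y" unfolding Dw_def Y_def w by algebra
  have Y0: "Y \<noteq> 0" using D0 Dw_eq by simp
  have YZ: "Z2 Y" unfolding Y_def using z by (intro Z2_diff Z2_mult Z2_power) auto
  obtain j u'' where ju: "U2 u''" "Y = 2^j * u''" using Z2_decomp[OF YZ Y0] by blast
  have "Nw w / Dw w = (NU / u'') / 2^(j+2)" unfolding Nw_eq Dw_eq ju(2) using U2_nz[OF ju(1)]
    by (simp add: field_simps power_add)
  hence "deep (j+2) (Nw w / Dw w)" unfolding deep_def using U2_div[OF NUU ju(1)] by auto
  thus ?thesis by blast
qed

lemma D2b: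
  assumes w: "U2 w" and D0: "Dw w \<noteq> 0"
  shows "\<exists>z. Z2 z \<and> Nw w / Dw w = 2*z"
proof -
  obtain z0 where z0: "Z2 z0" "w = 1 + 2*z0" using w U2_char by blast
  define Y1 where "Y1 = 1 + 4*z0 + 12*z0^2 + 16*z0^3 + 8*z0^4 + 2*w^2 + 4*w"
  define DU where "DU = -3*w^2 + 2*(2*w^3 - 4*w - 2)"
  have Nw_eq: "Nw w = 2 * Y1" unfolding Nw_def Y1_def using z0(2) by algebra
  have Dw_eq: "Dw w = DU" unfolding Dw_def DU_def by algebra
  have DUU: "U2 DU" unfolding DU_def using w U2_3
    by (intro U2_add2 U2_minus U2_mult U2_power Z2_diff Z2_mult Z2_power) (auto intro: U2_Z2)
  have YZ: "Z2 Y1" unfolding Y1_def using z0(1) w by (intro Z2_add Z2_mult Z2_power) (auto intro: U2_Z2)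
  have "Nw w / Dw w = 2 * (Y1 / DU)" unfolding Nw_eq Dw_eq by simp
  thus ?thesis using Z2_div_U2[OF YZ DUU] by blast
qed

lemma deep_uniq: assumes "deep k w" "deep k' w" shows "k = k'"
proof -
  obtain u u' where "U2 u" "w = u / 2^k" "U2 u'" "w = u' / 2^k'" using assms unfolding deep_def by blast
  thus ?thesis using deep_unique[of u u' k k'] by simp
qed

lemma two_steps:
  assumes D0: "Dw w \<noteq> 0" and D1': "Dw (Nw w / Dw w) \<noteq> 0"
  shows "\<exists>k. deep k (Nw (Nw w / Dw w) / Dw (Nw w / Dw w))"
proof -
  let ?w1 = "Nw w / Dw w"
  have cls: "(\<exists>k. deep k w) \<or> (\<exists>z. Z2 z \<and> w = 2*z) \<or> U2 w"
  proof (cases "w = 0")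
    case True thus ?thesis by (intro disjI2 disjI1 exI[of _ 0]) auto
  next
    case False
    from rat_decomp[OF this] show ?thesis
    proof
      assume "Z2 w" thus ?thesis using Z2_split by blast
    next
      assume "\<exists>k u. k \<ge> 1 \<and> U2 u \<and> w = u / 2^k"
      thus ?thesis unfolding deep_def by blast
    qed
  qed
  from cls show ?thesis
  proof (elim disjE)
    assume "\<exists>k. deep k w"
    then obtain k where "deep k w" by blast
    then obtain k' where "deep k' ?w1" using D1[OF _ D0] by blast
    then obtain k'' where "deep k'' (Nw ?w1 / Dw ?w1)" using D1[OF _ D1'] by blast
    thus ?thesis by blast
  next
    assume "\<exists>z. Z2 z \<and> w = 2*z"
    then obtain z where "Z2 z" "w = 2*z" by blast
    then obtain k' where "deep k' ?w1" using D2a D0 by blast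
    then obtain k'' where "deep k'' (Nw ?w1 / Dw ?w1)" using D1[OF _ D1'] by blast
    thus ?thesis by blast
  next
    assume "U2 w"
    then obtain z where "Z2 z" "?w1 = 2*z" using D2b D0 by blast
    thus ?thesis using D2a D1' by blast
  qed
qed

lemma dyn_inj:
  assumes rec: "\<And>j. ws (Suc j) = Nw (ws j) / Dw (ws j)" and nz: "\<And>j. Dw (ws j) \<noteq> 0"
    and ij: "i < j"
  shows "ws i \<noteq> ws j"
proof
  assume eq: "ws i = ws j"
  have deep2: "\<exists>k. deep k (ws (Suc (Suc n)))" for n
  proof -
    have h: "Dw (Nw (ws n) / Dw (ws n)) \<noteq> 0" using nz[of "Suc n"] rec[of n] by simp
    have "ws (Suc (Suc n)) = Nw (Nw (ws n) / Dw (ws n)) / Dw (Nw (ws n) / Dw (ws n))"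
      using rec[of "Suc n"] rec[of n] by simp
    thus ?thesis using two_steps[OF nz[of n] h] by simp
  qed
  have incr: "deep k (ws (n + 2)) \<Longrightarrow> \<exists>k'. k' > k + m \<and> deep k' (ws (n + 2 + Suc m))" for k n m
  proof (induction m arbitrary: k)
    case 0
    then obtain k' where "k' > k" "deep k' (Nw (ws (n+2)) / Dw (ws (n+2)))" using D1 nz by blast
    thus ?case using rec[of "n+2"] by auto
  next
    case (Suc m)
    then obtain k' where k': "k' > k + m" "deep k' (ws (n + 2 + Suc m))" by blast
    then obtain k'' where "k'' > k'" "deep k'' (Nw (ws (n + 2 + Suc m)) / Dw (ws (n + 2 + Suc m)))"
      using D1 nz by blast
    thus ?case using rec[of "n + 2 + Suc m"] k' by (intro exI[of _ k'']) auto
  qed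
  have eq2: "ws (i + 2) = ws (j + 2)" using eq rec by simp
  obtain k where k: "deep k (ws (i + 2))" using deep2[of i] by (auto simp: numeral_2_eq_2)
  from less_imp_Suc_add[OF ij] obtain m where "j = Suc (i + m)" by blast
  hence m: "j = i + Suc m" by simp
  obtain k' where "k' > k + m" "deep k' (ws (i + 2 + Suc m))" using incr[OF k] by blast
  hence "deep k' (ws (i + 2))" using eq2 m by (simp add: algebra_simps)
  with k have "k = k'" using deep_uniq by blast
  thus False using \<open>k' > k + m\<close> by simp
qed


section \<open>The specific curve\<close>

lemma no_rat_sqrt7: "(t::rat)^2 \<noteq> 7"
proof
  assume h: "t^2 = 7"
  obtain p q where pq: "quotient_of t = (p, q)" by (cases "quotient_of t") auto
  have q0: "q > 0" using quotient_of_denom_pos[OF pq] .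
  have cop: "coprime p q" using quotient_of_coprime[OF pq] .
  have t: "t = of_int p / of_int q" using quotient_of_div[OF pq] .
  have "(of_int p / of_int q :: rat)^2 = 7" using h t by simp
  hence "(of_int (p^2) :: rat) = of_int (7 * q^2)" using q0 by (simp add: field_simps power2_eq_square)
  hence e: "p^2 = 7 * q^2" by (simp only: of_int_eq_iff)
  have pr: "prime (7::int)" by simp
  have "7 dvd p^2" using e by simp
  hence "7 dvd p" using pr prime_dvd_power by blast
  then obtain k where k: "p = 7 * k" by blast
  have "q^2 = 7 * k^2" using e k by (simp add: power2_eq_square)
  hence "7 dvd q^2" by simp
  hence "7 dvd q" using pr prime_dvd_power by blast
  have g1: "gcd p q = 1" using cop by (simp add: coprime_iff_gcd_eq_1)
  have "(7::int) dvd 1" using gcd_greatest[OF \<open>7 dvd p\<close> \<open>7 dvd q\<close>] g1 by simp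
  thus False by simp
qed

lemma fc_factor: "fc (- 35 * D^2) (- 98 * D^3) x = (x - 7*D) * (x^2 + 7*D*x + 14*D^2)"
  unfolding fc_def by algebra

lemma quad_pos: assumes "(D::rat) \<noteq> 0" shows "x^2 + 7*D*x + 14*D^2 > 0"
proof -
  have "x^2 + 7*D*x + 14*D^2 = (x + 7*D/2)^2 + 7*D^2/4" by (simp add: field_simps power2_eq_square)
  moreover have "D^2 > 0" using assms by simp
  moreover have "(x + 7*D/2)^2 \<ge> 0" by simp
  moreover have "7*D^2/4 > 0" using \<open>D^2 > 0\<close> by simp
  ultimately show ?thesis by linarith
qed

lemma fc_root: assumes "(D::rat) \<noteq> 0" "fc (- 35 * D^2) (- 98 * D^3) x = 0" shows "x = 7*D"
  using assms fc_factor[of D x] quad_pos[OF assms(1), of x] by auto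

lemma two_tors:
  assumes D0: "(D::rat) \<noteq> 0" and oP: "on_curve (- 35 * D^2) (- 98 * D^3) P" and P0: "P \<noteq> None"
    and h: "ec_add (- 35 * D^2) P P = None"
  shows "P = Some (7*D, 0)"
proof -
  obtain x y where P: "P = Some (x, y)" using P0 by (cases P rule: affine_cases) auto
  have c: "y^2 = fc (- 35 * D^2) (- 98 * D^3) x" using oP P by simp
  have "y = - y" using h P add_None_iff[OF c c] by simp
  hence y: "y = 0" by simp
  hence "fc (- 35 * D^2) (- 98 * D^3) x = 0" using c by simp
  hence "x = 7*D" using fc_root D0 by blast
  thus ?thesis using P y by simp
qed

lemma no_half:
  assumes D0: "(D::rat) \<noteq> 0" and oR: "on_curve (- 35 * D^2) (- 98 * D^3) R"
  shows "ec_add (- 35 * D^2) R R \<noteq> Some (7*D, 0)"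
proof
  assume h: "ec_add (- 35 * D^2) R R = Some (7*D, 0)"
  obtain x y where R: "R = Some (x, y)" using h by (cases R rule: affine_cases) auto
  have c: "y^2 = fc (- 35 * D^2) (- 98 * D^3) x" using oR R by simp
  have y0: "y \<noteq> 0" using h R add_vert[of x x y y] by auto
  have nv: "y \<noteq> - y" using y0 by simp
  define l where "l = (3 * x^2 + (- 35 * D^2)) / (2 * y)"
  have h': "ec_add (- 35 * D^2) (Some (x, y)) (Some (x, y)) = Some (7*D, 0)" using h R by simp
  have "l^2 - 2*x = 7*D" using h' unfolding add_tan[OF refl nv] Let_def l_def[symmetric] by simp
  hence "(l * (2*y))^2 = (2*x + 7*D) * (4 * y^2)" by algebra
  moreover have "l * (2*y) = 3 * x^2 + (- 35 * D^2)" unfolding l_def using y0 by simp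
  ultimately have "(3 * x^2 - 35 * D^2)^2 = (2*x + 7*D) * (4 * fc (- 35 * D^2) (- 98 * D^3) x)"
    using c by simp
  hence "(x^2 - 14*D*x - 63*D^2)^2 = 0" unfolding fc_def by algebra
  hence "x^2 - 14*D*x - 63*D^2 = 0" by simp
  hence "((x - 7*D) / (4*D))^2 = 7" using D0 by (simp add: field_simps power2_eq_square)
  thus False using no_rat_sqrt7 by blast
qed

lemma dup_rel:
  assumes D0: "(D::rat) \<noteq> 0" and c: "y^2 = fc (- 35 * D^2) (- 98 * D^3) x" and y0: "y \<noteq> 0"
    and h: "ec_add (- 35 * D^2) (Some (x, y)) (Some (x, y)) = Some (x', y')"
  shows "Dw ((x + D) / (4*D)) \<noteq> 0 \<and> (x' + D) / (4*D) = Nw ((x + D) / (4*D)) / Dw ((x + D) / (4*D))"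
proof -
  have nv: "y \<noteq> - y" using y0 by simp
  define l where "l = (3 * x^2 + (- 35 * D^2)) / (2 * y)"
  have x': "x' = l^2 - 2*x" using h unfolding add_tan[OF refl nv] Let_def l_def[symmetric] by simp
  have Dw_eq: "Dw ((x + D) / (4*D)) = y^2 / (16 * D^3)"
    unfolding Dw_def c fc_def using D0 by (simp add: field_simps) algebra
  have Dnz: "Dw ((x + D) / (4*D)) \<noteq> 0" unfolding Dw_eq using D0 y0 by simp
  have l2: "l^2 = (3 * x^2 - 35 * D^2)^2 / (4 * y^2)" unfolding l_def by (simp add: power2_eq_square field_simps)
  have "(x' + D) / (4*D) = ((3 * x^2 - 35 * D^2)^2 / (4 * y^2) - 2*x + D) / (4*D)"
    unfolding x' l2 ..
  also have "\<dots> = Nw ((x + D) / (4*D)) / Dw ((x + D) / (4*D))"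
  proof -
    define F where "F = fc (- 35 * D^2) (- 98 * D^3) x"
    define P where "P = (x+D)^4 + 64 * D^2 * (x+D)^2 + 512 * D^3 * (x+D) + 256 * D^4"
    have F0: "F \<noteq> 0" using c y0 unfolding F_def by auto
    have NwE: "Nw ((x + D) / (4*D)) = P / (256 * D^4)"
      unfolding Nw_def P_def using D0 by (simp add: field_simps) algebra
    have DwE: "Dw ((x + D) / (4*D)) = F / (16 * D^3)" using Dw_eq c unfolding F_def by simp
    have pid: "P = (3 * x^2 - 35 * D^2)^2 - 8*x*F + 4*D*F"
      unfolding P_def F_def fc_def by algebra
    have "((3 * x^2 - 35 * D^2)^2 / (4 * y^2) - 2*x + D) / (4*D) = P / (16 * D * F)"
      unfolding pid using c F0 D0 unfolding F_def[symmetric] by (simp add: field_simps)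
    also have "\<dots> = (P / (256 * D^4)) / (F / (16 * D^3))"
      using F0 D0 by (simp add: field_simps) algebra
    finally show ?thesis unfolding NwE DwE .
  qed
  finally show ?thesis using Dnz by simp
qed


theorem lemmaA1:
  fixes d :: int
  assumes "squarefree d"
  shows "ec_torsion (- 35 * (of_int d)^2) (- 98 * (of_int d)^3)
           = {None, Some (7 * of_int d, 0)}"
proof -
  define D where "D = (of_int d :: rat)"
  have D0: "D \<noteq> 0" using assms D_def by auto
  define a where "a = - 35 * D^2"
  define b where "b = - 98 * D^3"
  have "4*a^3 + 27*b^2 = 87808 * D^6" unfolding a_def b_def by algebra
  hence ns: "4*a^3 + 27*b^2 \<noteq> 0" using D0 by simp
  define T where "T = Some (7 * D, 0::rat)"
  have oT: "on_curve a b T" unfolding T_def a_def b_def by (simp add: fc_def) algebra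
  have TT: "ec_add a T T = None" unfolding T_def by (rule add_vert) auto
  have sub1: "{None, T} \<subseteq> ec_torsion a b"
  proof -
    have "ec_mult a 1 None = None" by simp
    hence "None \<in> ec_torsion a b" unfolding ec_torsion_def by (auto intro!: exI[of _ 1])
    moreover have "ec_mult a 2 T = None" using TT by (simp add: numeral_2_eq_2)
    hence "T \<in> ec_torsion a b" using oT unfolding ec_torsion_def by (auto intro!: exI[of _ 2])
    ultimately show ?thesis by auto
  qed
  have sub2: "ec_torsion a b \<subseteq> {None, T}"
  proof
    fix P assume "P \<in> ec_torsion a b"
    then obtain n where oP: "on_curve a b P" and n0: "n > 0" and nP: "ec_mult a n P = None"
      unfolding ec_torsion_def by auto
    show "P \<in> {None, T}"
    proof (rule ccontr)
      assume nPT: "P \<notin> {None, T}"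
      define R where "R j = ec_mult a (2^j) P" for j
      have R0: "R 0 = P" unfolding R_def by simp
      have RS: "R (Suc j) = ec_add a (R j) (R j)" for j
        unfolding R_def using mult_double[OF ns oP, of "2^j"] by simp
      have oR: "on_curve a b (R j)" for j unfolding R_def using mult_closed[OF oP] .
      show False
      proof (cases "\<exists>j. R j = None")
        case True
        define j0 where "j0 = (LEAST j. R j = None)"
        have Rj0: "R j0 = None" unfolding j0_def using LeastI_ex[OF True] .
        have j00: "j0 \<noteq> 0"
        proof
          assume "j0 = 0"
          hence "P = None" using Rj0 R0 by simp
          thus False using nPT by simp
        qed
        then obtain j1 where j1: "j0 = Suc j1" by (cases j0) auto
        have Rj1: "R j1 \<noteq> None" using not_less_Least[of j1 "\<lambda>j. R j = None"] j1 unfolding j0_def by auto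
        have "ec_add a (R j1) (R j1) = None" using RS[of j1] Rj0 j1 by simp
        hence RT: "R j1 = T" using two_tors[OF D0 oR[of j1, unfolded a_def b_def] Rj1] unfolding T_def a_def by simp
        show False
        proof (cases j1)
          case 0 thus False using RT R0 nPT by simp
        next
          case (Suc j2)
          have "ec_add a (R j2) (R j2) = T" using RS[of j2] RT Suc by simp
          thus False using no_half[OF D0 oR[of j2, unfolded a_def b_def]] unfolding T_def a_def by simp
        qed
      next
        case False
        hence RN: "R j \<noteq> None" for j by auto
        have RnT: "R j \<noteq> T" for j
        proof
          assume "R j = T"
          hence "R (Suc j) = None" using RS[of j] TT by simp
          thus False using RN by simp
        qed
        define X where "X j = fst (the (R j))" for j
        define Y where "Y j = snd (the (R j))" for j
        have RXY: "R j = Some (X j, Y j)" for j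
          using RN[of j] unfolding X_def Y_def by (cases "R j" rule: affine_cases) auto
        have cXY: "(Y j)^2 = fc (- 35 * D^2) (- 98 * D^3) (X j)" for j
          using oR[of j] RXY[of j] unfolding a_def b_def by simp
        have Y0: "Y j \<noteq> 0" for j
        proof
          assume "Y j = 0"
          hence "R (Suc j) = None" using RS[of j] RXY[of j] add_vert[of "X j" "X j" "Y j" "Y j" a] by simp
          thus False using RN by simp
        qed
        define ws where "ws j = (X j + D) / (4*D)" for j
        have step: "Dw (ws j) \<noteq> 0 \<and> ws (Suc j) = Nw (ws j) / Dw (ws j)" for j
        proof -
          have "ec_add (- 35 * D^2) (Some (X j, Y j)) (Some (X j, Y j)) = Some (X (Suc j), Y (Suc j))"
            using RS[of j] RXY[of j] RXY[of "Suc j"] unfolding a_def by simp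
          from dup_rel[OF D0 cXY[of j] Y0[of j] this] show ?thesis unfolding ws_def by simp
        qed
        have injR: "inj R"
        proof (rule injI)
          fix i j assume e: "R i = R j"
          show "i = j"
          proof (rule ccontr)
            assume "i \<noteq> j"
            hence "i < j \<or> j < i" by auto
            moreover have "ws i = ws j" using e RXY[of i] RXY[of j] unfolding ws_def by simp
            moreover have rec: "\<And>j. ws (Suc j) = Nw (ws j) / Dw (ws j)" using step by blast
            moreover have nz: "\<And>j. Dw (ws j) \<noteq> 0" using step by blast
            ultimately show False
              using dyn_inj[of ws, OF rec nz] by metis
          qed
        qed
        have "range R \<subseteq> (\<lambda>k. ec_mult a k P) ` {..<n}"
        proof
          fix Q assume "Q \<in> range R"
          then obtain j where "Q = R j" by blast
          hence "Q = ec_mult a (2^j mod n) P" unfolding R_def using mult_mod[OF ns oP nP] by simp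
          moreover have "2^j mod n < n" using n0 by simp
          ultimately show "Q \<in> (\<lambda>k. ec_mult a k P) ` {..<n}" by blast
        qed
        hence "finite (range R)" by (rule finite_subset) simp
        hence "finite (UNIV :: nat set)" using finite_imageD injR by blast
        thus False by simp
      qed
    qed
  qed
  have "ec_torsion a b = {None, T}" using sub1 sub2 by blast
  thus ?thesis unfolding a_def b_def T_def D_def .
qed

end
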